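(* Let $X$ and $Y$ be topological spaces with $Y$ a $T_0$-space, and let $p\colon X\to Y$ be a surjective continuous map. Let $R$ be an equivalence relation on $X$ such that: (i) if $x_1\sim_R x_2$ then $p(x_1)=p(x_2)$; (ii) for every open $U\subset X$, its $R$-saturation $R(U):=\{x\in X: x\sim_R u \text{ for some } u\in U\}$ is open in $X$; (iii) if $x\in X$ and $A\subset X$ satisfy $p(x)\in\overline{p(A)}$, then $x\in\overline{R(A)}$. Then $p$ induces a homeomorphism of $(X/R)^\sim$ onto $Y$. Moreover, $p\colon X\to Y$ is open, and $p(x_1)=p(x_2)$ if and only if $\overline{R(x_1)}=\overline{R(x_2)}$, where $R(x)$ denotes the $R$-equivalence class of $x$.
   Context: For a topological space $Z$, its $T_0$-ization (Kolmogorov quotient) $Z^\sim$ is the quotient space of $Z$ obtained by identifying two points whenever they have the same closure. $X/R$ carries the quotient topology. *)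

theory Defs
  imports "HOL-Analysis.Analysis"
begin

definition quotient_topology :: "'a topology \<Rightarrow> ('a \<times> 'a) set \<Rightarrow> 'a set topology" where
  "quotient_topology Z E =
     topology (\<lambda>S. S \<subseteq> topspace Z // E \<and> openin Z (\<Union>S))"

definition same_closure_rel :: "'a topology \<Rightarrow> ('a \<times> 'a) set" where
  "same_closure_rel Z =
     {(z, w). z \<in> topspace Z \<and> w \<in> topspace Z \<and> Z closure_of {z} = Z closure_of {w}}"

definition T0_ization :: "'a topology \<Rightarrow> 'a set topology" where
  "T0_ization Z = quotient_topology Z (same_closure_rel Z)"

end

theory Submission
  imports Defs
begin

lemma openin_qt:
  assumes E: "equiv (topspace Z) E"
  shows "openin (quotient_topology Z E) S \<longleftrightarrow> S \<subseteq> topspace Z // E \<and> openin Z (\<Union>S)"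
proof -
  have "istopology (\<lambda>S. S \<subseteq> topspace Z // E \<and> openin Z (\<Union>S))"
  proof (simp only: istopology_def, rule conjI; intro allI impI)
    fix S T assume S: "S \<subseteq> topspace Z // E \<and> openin Z (\<Union>S)"
      and T: "T \<subseteq> topspace Z // E \<and> openin Z (\<Union>T)"
    have "\<Union>(S \<inter> T) = \<Union>S \<inter> \<Union>T"
    proof
      show "\<Union>S \<inter> \<Union>T \<subseteq> \<Union>(S \<inter> T)"
      proof
        fix x assume "x \<in> \<Union>S \<inter> \<Union>T"
        then obtain A B where "x \<in> A" "A \<in> S" "x \<in> B" "B \<in> T" by blast
        then have "A = B" using quotient_disj[OF E, of A B] S T by blast
        then show "x \<in> \<Union>(S \<inter> T)" using \<open>x \<in> A\<close> \<open>A \<in> S\<close> \<open>B \<in> T\<close> by blast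
      qed
    qed blast
    then show "S \<inter> T \<subseteq> topspace Z // E \<and> openin Z (\<Union>(S \<inter> T))"
      using S T by auto
  next
    fix K assume "\<forall>S\<in>K. S \<subseteq> topspace Z // E \<and> openin Z (\<Union>S)"
    moreover have "\<Union>(\<Union>K) = \<Union>((\<lambda>S. \<Union>S) ` K)" by auto
    ultimately show "\<Union>K \<subseteq> topspace Z // E \<and> openin Z (\<Union>(\<Union>K))"
      apply (intro conjI) apply blast
      using openin_Union[of "Union ` K" Z] by (metis imageE)
  qed
  then show ?thesis unfolding quotient_topology_def by simp
qed

lemma topspace_qt:
  assumes E: "equiv (topspace Z) E"
  shows "topspace (quotient_topology Z E) = topspace Z // E"
proof -
  have "openin (quotient_topology Z E) (topspace Z // E)"
    using E by (simp add: openin_qt Union_quotient)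
  then have "topspace Z // E \<subseteq> topspace (quotient_topology Z E)"
    by (simp add: openin_subset)
  moreover have "topspace (quotient_topology Z E) \<subseteq> topspace Z // E"
    using openin_qt[OF E, of "topspace (quotient_topology Z E)"] by simp
  ultimately show ?thesis by blast
qed

lemma quotient_map_qt:
  assumes E: "equiv (topspace Z) E"
  shows "quotient_map Z (quotient_topology Z E) (\<lambda>z. E `` {z})"
  unfolding quotient_map_def
proof (intro conjI allI impI)
  show "(\<lambda>z. E `` {z}) ` topspace Z = topspace (quotient_topology Z E)"
    using E by (auto simp: topspace_qt quotient_def)
  fix U assume U: "U \<subseteq> topspace (quotient_topology Z E)"
  then have U': "U \<subseteq> topspace Z // E" using E by (simp add: topspace_qt)
  have "{x \<in> topspace Z. E `` {x} \<in> U} = \<Union>U"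
  proof
    show "{x \<in> topspace Z. E `` {x} \<in> U} \<subseteq> \<Union>U"
      using E by (auto simp: equiv_def refl_on_def)
    show "\<Union>U \<subseteq> {x \<in> topspace Z. E `` {x} \<in> U}"
    proof
      fix x assume "x \<in> \<Union>U"
      then obtain C where "x \<in> C" "C \<in> U" by blast
      then obtain y where y: "C = E``{y}" "y \<in> topspace Z" using U' by (auto elim: quotientE)
      then have "E``{x} = C" using \<open>x \<in> C\<close> E by (metis equiv_class_eq Image_singleton_iff)
      moreover have "x \<in> topspace Z" using \<open>x \<in> C\<close> y E by (auto simp: equiv_def refl_on_def)
      ultimately show "x \<in> {x \<in> topspace Z. E `` {x} \<in> U}" using \<open>C \<in> U\<close> by simp
    qed
  qed
  then show "openin Z {x \<in> topspace Z. E `` {x} \<in> U} = openin (quotient_topology Z E) U"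
    using U' E by (simp add: openin_qt)
qed

lemma equiv_scr: "equiv (topspace Z) (same_closure_rel Z)"
  unfolding equiv_def refl_on_def sym_def trans_def same_closure_rel_def by auto

lemma closure_sing_eq:
  assumes "a \<in> topspace Z" "b \<in> topspace Z"
  shows "Z closure_of {a} = Z closure_of {b} \<longleftrightarrow> (\<forall>U. openin Z U \<longrightarrow> (a \<in> U \<longleftrightarrow> b \<in> U))"
proof
  assume h: "Z closure_of {a} = Z closure_of {b}"
  have "a \<in> Z closure_of {b}" "b \<in> Z closure_of {a}"
    using h assms closure_of_subset[of "{a}" Z] closure_of_subset[of "{b}" Z] by auto
  then show "\<forall>U. openin Z U \<longrightarrow> (a \<in> U \<longleftrightarrow> b \<in> U)"
    by (auto simp: in_closure_of)
next
  assume "\<forall>U. openin Z U \<longrightarrow> (a \<in> U \<longleftrightarrow> b \<in> U)"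
  then show "Z closure_of {a} = Z closure_of {b}"
    by (auto simp: in_closure_of)
qed

theorem lemma1p4:
  fixes X :: "'a topology" and Y :: "'b topology"
    and p :: "'a \<Rightarrow> 'b" and R :: "('a \<times> 'a) set"
  assumes "t0_space Y"
    and "continuous_map X Y p"
    and "p ` topspace X = topspace Y"
    and "equiv (topspace X) R"
    and "\<And>x1 x2. (x1, x2) \<in> R \<Longrightarrow> p x1 = p x2"
    and "\<And>U. openin X U \<Longrightarrow> openin X (R `` U)"
    and "\<And>x A. x \<in> topspace X \<Longrightarrow> A \<subseteq> topspace X \<Longrightarrow>
           p x \<in> Y closure_of (p ` A) \<Longrightarrow> x \<in> X closure_of (R `` A)"
  shows "(\<exists>f. homeomorphic_map (T0_ization (quotient_topology X R)) Y f \<and>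
            (\<forall>x \<in> topspace X.
               f (same_closure_rel (quotient_topology X R) `` {R `` {x}}) = p x))
         \<and> open_map X Y p
         \<and> (\<forall>x1 \<in> topspace X. \<forall>x2 \<in> topspace X.
               p x1 = p x2 \<longleftrightarrow> X closure_of (R `` {x1}) = X closure_of (R `` {x2}))"
proof -
  define Q where "Q = quotient_topology X R"
  define SC where "SC = same_closure_rel Q"
  define T where "T = T0_ization Q"
  define \<pi> where "\<pi> = (\<lambda>C. SC `` {C}) \<circ> (\<lambda>x. R `` {x})"
  have E: "equiv (topspace X) R" by fact
  have Rsub: "R \<subseteq> topspace X \<times> topspace X" using E by (simp add: equiv_def refl_on_def)
  have self: "x \<in> R `` {x}" if "x \<in> topspace X" for x
    using E that by (simp add: equiv_def refl_on_def)
  have topQ: "topspace Q = topspace X // R" unfolding Q_def by (simp add: topspace_qt E)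
  have opQ: "openin Q S \<longleftrightarrow> S \<subseteq> topspace X // R \<and> openin X (\<Union>S)" for S
    unfolding Q_def by (simp add: openin_qt E)
  have qR: "quotient_map X Q (\<lambda>x. R `` {x})" unfolding Q_def by (rule quotient_map_qt[OF E])
  have qS: "quotient_map Q T (\<lambda>C. SC `` {C})" unfolding T_def T0_ization_def SC_def
    by (rule quotient_map_qt[OF equiv_scr])
  have qpi: "quotient_map X T \<pi>" unfolding \<pi>_def by (rule quotient_map_compose[OF qR qS])
  have cl: "x \<in> X closure_of (R `` {y})" if "x \<in> topspace X" "y \<in> topspace X" "p x = p y" for x y
  proof -
    have "p y \<in> topspace Y" using assms(3) that by blast
    then have "p x \<in> Y closure_of (p ` {y})" using that closure_of_subset[of "{p y}" Y] by auto
    then show ?thesis using assms(7)[of x "{y}"] that by auto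
  qed
  have K1: "R `` {y} \<in> S" if H: "x \<in> topspace X" "y \<in> topspace X" "p x = p y" "openin Q S" "R `` {x} \<in> S" for x y S
  proof -
    have "x \<in> \<Union>S" using H self by blast
    moreover have "openin X (\<Union>S)" using H opQ by blast
    ultimately obtain z where z: "z \<in> R `` {y}" "z \<in> \<Union>S"
      using cl[OF H(1-3), unfolded in_closure_of] by (elim conjE allE[of _ "\<Union>S"]) auto
    then obtain C where C: "z \<in> C" "C \<in> S" by blast
    then have "C \<in> topspace X // R" using H opQ by blast
    then obtain w where "C = R``{w}" "w \<in> topspace X" by (auto elim: quotientE)
    then have "C = R``{z}" using C(1) E by (metis equiv_class_eq Image_singleton_iff)
    also have "\<dots> = R``{y}" using z(1) E by (metis equiv_class_eq Image_singleton_iff)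
    finally show ?thesis using C by simp
  qed
  have K2: "\<exists>S. openin Q S \<and> \<not> (R `` {x} \<in> S \<longleftrightarrow> R `` {y} \<in> S)"
    if H2: "x \<in> topspace X" "y \<in> topspace X" "p x \<noteq> p y" for x y
  proof -
    have pxy: "p x \<in> topspace Y" "p y \<in> topspace Y" using assms(3) H2(1,2) by auto
    obtain V where V: "openin Y V" "p x \<notin> V \<longleftrightarrow> p y \<in> V"
      using assms(1)[unfolded t0_space_def, rule_format, OF pxy H2(3)] by blast
    define Ow where "Ow = {z \<in> topspace X. p z \<in> V}"
    have Oo: "openin X Ow" unfolding Ow_def using assms(2) V(1) openin_continuous_map_preimage by blast
    define S where "S = (\<lambda>z. R``{z}) ` Ow"
    have sat: "R``{z} \<subseteq> Ow" if Z: "z \<in> Ow" for z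
      using Z Rsub assms(5) unfolding Ow_def by auto
    have "\<Union>S = Ow"
    proof
      show "\<Union>S \<subseteq> Ow" unfolding S_def using sat by blast
      show "Ow \<subseteq> \<Union>S"
      proof
        fix z assume "z \<in> Ow"
        then have "z \<in> R``{z}" "R``{z} \<in> S" using self unfolding S_def Ow_def by auto
        then show "z \<in> \<Union>S" by blast
      qed
    qed
    moreover have "S \<subseteq> topspace X // R" unfolding S_def Ow_def by (auto intro: quotientI)
    ultimately have So: "openin Q S" using Oo opQ by simp
    have mem: "R``{w} \<in> S \<longleftrightarrow> p w \<in> V" if "w \<in> topspace X" for w
    proof
      assume "R``{w} \<in> S"
      then obtain z where "z \<in> Ow" "R``{w} = R``{z}" unfolding S_def by blast
      then have "w \<in> Ow" using sat self[OF that] by blast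
      then show "p w \<in> V" unfolding Ow_def by simp
    next
      assume "p w \<in> V" then show "R``{w} \<in> S" unfolding S_def Ow_def using that by blast
    qed
    show ?thesis using So mem H2 V(2) by blast
  qed
  have ker: "\<pi> x = \<pi> y \<longleftrightarrow> p x = p y" if "x \<in> topspace X" "y \<in> topspace X" for x y
  proof -
    have inQ: "R``{x} \<in> topspace Q" "R``{y} \<in> topspace Q" using topQ that by (auto intro: quotientI)
    have "\<pi> x = \<pi> y \<longleftrightarrow> (R``{x}, R``{y}) \<in> SC"
      unfolding \<pi>_def SC_def using eq_equiv_class_iff[OF equiv_scr inQ] by simp
    also have "\<dots> \<longleftrightarrow> (\<forall>S. openin Q S \<longrightarrow> (R``{x} \<in> S \<longleftrightarrow> R``{y} \<in> S))"
      unfolding SC_def same_closure_rel_def using closure_sing_eq[OF inQ] inQ by simp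
    also have "\<dots> \<longleftrightarrow> p x = p y"
      using K1[of x y] K1[of y x] K2[of x y] that by metis
    finally show ?thesis .
  qed
  have opm: "open_map X Y p"
    unfolding open_map_def
  proof (intro allI impI)
    fix U assume U: "openin X U"
    have sub: "p ` U \<subseteq> topspace Y" using assms(3) openin_subset[OF U] by blast
    define A where "A = {z \<in> topspace X. p z \<notin> p ` U}"
    have pA: "p ` A = topspace Y - p ` U" unfolding A_def using assms(3) by auto
    have RA: "R `` A \<subseteq> A" unfolding A_def using Rsub assms(5) by auto
    have "Y closure_of (topspace Y - p ` U) \<subseteq> topspace Y - p ` U"
    proof
      fix y assume y: "y \<in> Y closure_of (topspace Y - p ` U)"
      then have yY: "y \<in> topspace Y" by (simp add: in_closure_of)
      show "y \<in> topspace Y - p ` U"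
      proof (rule ccontr)
        assume "y \<notin> topspace Y - p ` U"
        then obtain u where u: "u \<in> U" "y = p u" using yY by blast
        have uX: "u \<in> topspace X" using u openin_subset[OF U] by blast
        have "u \<in> X closure_of (R `` A)"
          using assms(7)[of u A] uX y u pA unfolding A_def by auto
        then obtain z where "z \<in> R `` A" "z \<in> U" using U u(1) unfolding in_closure_of by (elim conjE allE[of _ U]) auto
        then show False using RA unfolding A_def by auto
      qed
    qed
    then have "closedin Y (topspace Y - p ` U)" using closure_of_subset_eq by blast
    then show "openin Y (p ` U)" using sub openin_closedin_eq by blast
  qed
  have qp: "quotient_map X Y p"
    by (rule continuous_open_imp_quotient_map[OF assms(2) opm assms(3)])
  obtain g where g: "continuous_map T Y g" "\<And>x. x \<in> topspace X \<Longrightarrow> g (\<pi> x) = p x"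
    using quotient_map_lift_exists[OF qpi assms(2)] ker by metis
  have topT: "topspace T = \<pi> ` topspace X" using qpi by (simp add: quotient_map_def)
  have "quotient_map T Y g"
  proof (rule quotient_map_from_composition[OF quotient_imp_continuous_map[OF qpi] g(1)])
    show "quotient_map X Y (g \<circ> \<pi>)" using quotient_map_eq[OF qp] g(2) by simp
  qed
  moreover have "inj_on g (topspace T)"
    unfolding topT inj_on_def using g(2) ker by auto
  ultimately have hom: "homeomorphic_map T Y g" by (simp add: homeomorphic_map_def)
  have third: "p x1 = p x2 \<longleftrightarrow> X closure_of (R `` {x1}) = X closure_of (R `` {x2})"
    if "x1 \<in> topspace X" "x2 \<in> topspace X" for x1 x2
  proof
    have inc: "X closure_of (R `` {a}) \<subseteq> X closure_of (R `` {b})"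
      if "a \<in> topspace X" "b \<in> topspace X" "p a = p b" for a b
    proof (rule closure_of_minimal[OF _ closedin_closure_of])
      show "R `` {a} \<subseteq> X closure_of (R `` {b})"
      proof
        fix z assume z: "z \<in> R `` {a}"
        then have "z \<in> topspace X" "p z = p b" using Rsub assms(5) that by auto
        then show "z \<in> X closure_of (R `` {b})" using cl that by blast
      qed
    qed
    assume "p x1 = p x2"
    then show "X closure_of (R `` {x1}) = X closure_of (R `` {x2})"
      using inc that by (metis subset_antisym)
  next
    have dir: "p a \<in> V \<Longrightarrow> p b \<in> V"
      if "a \<in> topspace X" "b \<in> topspace X" "X closure_of (R `` {a}) = X closure_of (R `` {b})"
         "openin Y V" for a b V
    proof -
      assume pa: "p a \<in> V"
      have "a \<in> X closure_of (R `` {b})"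
        using that(1,3) self closure_of_subset[of "R``{a}" X] Rsub by auto
      moreover have "openin X {z \<in> topspace X. p z \<in> V}"
        using assms(2) that(4) openin_continuous_map_preimage by blast
      ultimately obtain z where "z \<in> R``{b}" "p z \<in> V"
        using pa that(1) unfolding in_closure_of
        by (elim conjE allE[of _ "{z \<in> topspace X. p z \<in> V}"]) auto
      then show "p b \<in> V" using assms(5) by auto
    qed
    assume h: "X closure_of (R `` {x1}) = X closure_of (R `` {x2})"
    show "p x1 = p x2"
    proof (rule ccontr)
      assume "p x1 \<noteq> p x2"
      moreover have "p x1 \<in> topspace Y" "p x2 \<in> topspace Y" using assms(3) that by auto
      ultimately obtain V where "openin Y V" "p x1 \<notin> V \<longleftrightarrow> p x2 \<in> V"
        using assms(1)[unfolded t0_space_def] by blast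
      then show False using dir[OF that h] dir[OF that(2,1) h[symmetric]] by blast
    qed
  qed
  show ?thesis
    using hom g(2) opm third unfolding T_def Q_def SC_def \<pi>_def by auto
qed

end
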